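(* Let $a(x),b(x),m(x)\in R_n=\mathbb{F}_2[x]/\langle x^n-1\rangle$ with $b(x)=m(x)a(x)$ in $R_n$. If the generalized bicycle code defined by $a(x)$ and $b(x)$ has dimension larger than zero, then its minimum distance is at most $\mathrm{wt}(m(x))+1$.
   Context: Elements of $R_n$ are identified with binary vectors of length $n$ via their representative of degree $<n$; $\mathrm{wt}$ is the number of nonzero coefficients. The generalized bicycle (GB) code defined by $a(x),b(x)$ is the CSS code on $2n$ qubits, vectors of $\mathbb{F}_2^{2n}$ written as pairs $(u(x),v(x))$, with $C_2=\{(c(x)a(x),c(x)b(x)):c\in R_n\}$ (X-stabilizers), $C_1=\{(u,v):u(x)b(x)+v(x)a(x)=0\text{ in }R_n\}$, $C_2'=\{(c(x)b(x^{-1}),c(x)a(x^{-1})):c\in R_n\}$ (Z-stabilizers), $C_1'=\{(u,v):u(x)a(x^{-1})+v(x)b(x^{-1})=0\}$, where $x^{-1}=x^{n-1}$. Its dimension is $\dim C_1-\dim C_2$ and its minimum distance is $\min\{\min_{w\in C_1\setminus C_2}\mathrm{wt}(w),\ \min_{w\in C_1'\setminus C_2'}\mathrm{wt}(w)\}$. *)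

theory Defs
  imports "HOL-Library.Z2" "HOL-Library.Product_Plus" "HOL-Computational_Algebra.Polynomial"
begin

text \<open>R_n = F_2[x]/(x^n - 1); elements are represented by their unique
  representative polynomial of degree < n over F_2 (type bit).\<close>

definition xn1 :: "nat \<Rightarrow> bit poly" where
  "xn1 n = monom 1 n - 1"

definition Rn :: "nat \<Rightarrow> bit poly set" where
  "Rn n = {p. p mod xn1 n = p}"

definition mulR :: "nat \<Rightarrow> bit poly \<Rightarrow> bit poly \<Rightarrow> bit poly" where
  "mulR n p q = (p * q) mod xn1 n"

text \<open>p(x^{-1}) with x^{-1} = x^{n-1}, for a representative p of degree < n.\<close>
definition conjR :: "nat \<Rightarrow> bit poly \<Rightarrow> bit poly" where
  "conjR n p = (\<Sum>i<n. monom (coeff p i) ((n - i) mod n))"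

definition wt :: "bit poly \<Rightarrow> nat" where
  "wt p = card {i. coeff p i \<noteq> 0}"

definition pwt :: "bit poly \<times> bit poly \<Rightarrow> nat" where
  "pwt w = wt (fst w) + wt (snd w)"

definition GB_C2 :: "nat \<Rightarrow> bit poly \<Rightarrow> bit poly \<Rightarrow> (bit poly \<times> bit poly) set" where
  "GB_C2 n a b = {(mulR n c a, mulR n c b) | c. c \<in> Rn n}"

definition GB_C1 :: "nat \<Rightarrow> bit poly \<Rightarrow> bit poly \<Rightarrow> (bit poly \<times> bit poly) set" where
  "GB_C1 n a b = {(u, v). u \<in> Rn n \<and> v \<in> Rn n \<and> mulR n u b + mulR n v a = 0}"

definition GB_C2' :: "nat \<Rightarrow> bit poly \<Rightarrow> bit poly \<Rightarrow> (bit poly \<times> bit poly) set" where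
  "GB_C2' n a b = {(mulR n c (conjR n b), mulR n c (conjR n a)) | c. c \<in> Rn n}"

definition GB_C1' :: "nat \<Rightarrow> bit poly \<Rightarrow> bit poly \<Rightarrow> (bit poly \<times> bit poly) set" where
  "GB_C1' n a b = {(u, v). u \<in> Rn n \<and> v \<in> Rn n \<and>
      mulR n u (conjR n a) + mulR n v (conjR n b) = 0}"

definition f2span :: "(bit poly \<times> bit poly) set \<Rightarrow> (bit poly \<times> bit poly) set" where
  "f2span B = {sum (\<lambda>x. x) T | T. T \<subseteq> B \<and> finite T}"

definition f2dim :: "(bit poly \<times> bit poly) set \<Rightarrow> nat" where
  "f2dim S = (LEAST k. \<exists>B. finite B \<and> card B = k \<and> B \<subseteq> S \<and> f2span B = S)"

definition GB_dim :: "nat \<Rightarrow> bit poly \<Rightarrow> bit poly \<Rightarrow> int" where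
  "GB_dim n a b = int (f2dim (GB_C1 n a b)) - int (f2dim (GB_C2 n a b))"

definition GB_dist :: "nat \<Rightarrow> bit poly \<Rightarrow> bit poly \<Rightarrow> nat" where
  "GB_dist n a b = Min ({pwt w | w. w \<in> GB_C1 n a b - GB_C2 n a b}
                       \<union> {pwt w | w. w \<in> GB_C1' n a b - GB_C2' n a b})"

end

theory Submission
  imports Defs
begin

lemma bit_add_self: "(x::bit) + x = 0"
  by (cases x) auto

lemma bit_neg: "- (x::bit) = x"
  by (cases x) auto

lemma bpoly_add_self: "(p::bit poly) + p = 0"
  by (rule poly_eqI) (simp only: coeff_add coeff_0 bit_add_self)

lemma bpoly_neg: "- (p::bit poly) = p"
  by (simp add: poly_eq_iff bit_neg)

lemma coeff_xn1: "0 < n \<Longrightarrow> coeff (xn1 n) n = 1"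
  by (simp add: xn1_def coeff_monom)

lemma xn1_nz: "0 < n \<Longrightarrow> xn1 n \<noteq> 0"
  using coeff_xn1[of n] by (metis coeff_0 zero_neq_one)

lemma degree_xn1: "0 < n \<Longrightarrow> degree (xn1 n) = n"
proof -
  assume n: "0 < n"
  have "degree (xn1 n) \<le> n" unfolding xn1_def
    by (rule degree_diff_le) (simp_all add: degree_monom_le)
  moreover have "n \<le> degree (xn1 n)" by (rule le_degree) (simp add: coeff_xn1[OF n])
  ultimately show ?thesis by simp
qed

lemma wt_le: assumes n: "0 < n" and p: "p \<in> Rn n" shows "wt p \<le> n"
proof -
  have "{i. coeff p i \<noteq> 0} \<subseteq> {..<n}"
  proof
    fix i assume i: "i \<in> {i. coeff p i \<noteq> 0}"
    then have "p \<noteq> 0" by auto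
    then have "p mod xn1 n \<noteq> 0" using p by (simp add: Rn_def)
    then have "degree (p mod xn1 n) < n"
      using degree_mod_less'[OF xn1_nz[OF n]] degree_xn1[OF n] by simp
    then have "degree p < n" using p by (simp add: Rn_def)
    moreover have "i \<le> degree p" using i by (intro le_degree) simp
    ultimately show "i \<in> {..<n}" by simp
  qed
  then show ?thesis unfolding wt_def by (metis card_lessThan card_mono finite_lessThan)
qed

lemma one_Rn: "0 < n \<Longrightarrow> 1 \<in> Rn n"
proof -
  assume n: "0 < n"
  have "degree (1::bit poly) < degree (xn1 n)" using degree_xn1[OF n] n by simp
  then show ?thesis unfolding Rn_def by (simp add: mod_poly_less)
qed

lemma wt_one: "wt 1 = 1"
proof -
  have "{i. coeff (1::bit poly) i \<noteq> 0} = {0}" by (auto simp: coeff_1)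
  then show ?thesis by (simp add: wt_def)
qed

theorem lemma1:
  fixes n :: nat and a b m :: "bit poly"
  assumes "n > 0"
    and "a \<in> Rn n" and "b \<in> Rn n" and "m \<in> Rn n"
    and "b = mulR n m a"
    and "GB_dim n a b > 0"
  shows "GB_dist n a b \<le> wt m + 1"
proof -
  define N where "N = xn1 n"
  have RnI: "p mod N \<in> Rn n" for p by (simp add: Rn_def N_def)
  have mR: "mulR n p q = (p * q) mod N" for p q by (simp add: mulR_def N_def)
  have w1: "(1, m) \<in> GB_C1 n a b"
  proof -
    have "mulR n 1 b + mulR n m a = (m * a) mod N + (m * a) mod N"
      using assms(5) by (simp add: mR)
    also have "\<dots> = 0" by (rule bpoly_add_self)
    finally show ?thesis using one_Rn[OF assms(1)] assms(4) by (simp add: GB_C1_def)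
  qed
  have w2: "(1, m) \<notin> GB_C2 n a b"
  proof
    assume "(1, m) \<in> GB_C2 n a b"
    then obtain c where c: "c \<in> Rn n" "mulR n c a = 1" by (auto simp: GB_C2_def)
    have ca: "(c * a) mod N = 1" using c by (simp add: mR)
    have "GB_C1 n a b = GB_C2 n a b"
    proof
      show "GB_C1 n a b \<subseteq> GB_C2 n a b"
      proof
        fix w assume "w \<in> GB_C1 n a b"
        then obtain u v where w: "w = (u, v)" "u \<in> Rn n" "v \<in> Rn n"
          "(u * b) mod N + (v * a) mod N = 0"
          by (auto simp: GB_C1_def mR)
        have uu: "u mod N = u" and vv: "v mod N = v" using w by (auto simp: Rn_def N_def)
        have bb: "b = (m * a) mod N" using assms(5) by (simp add: mR)
        have "(u * b + v * a) mod N = ((u * b) mod N + (v * a) mod N) mod N"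
          by (rule mod_add_eq[symmetric])
        then have "(u * b + v * a) mod N = 0" using w(4) by simp
        moreover have "(u * b) mod N = (u * (m * a)) mod N"
          unfolding bb by (rule mod_mult_right_eq)
        moreover have "(u * (m * a) + v * a) mod N = ((u * (m * a)) mod N + v * a) mod N"
          by (rule mod_add_left_eq[symmetric])
        moreover have "(u * b + v * a) mod N = ((u * b) mod N + v * a) mod N"
          by (rule mod_add_left_eq[symmetric])
        ultimately have "(u * (m * a) + v * a) mod N = 0"
          by simp
        then have "((u * m + v) * a) mod N = 0" by (simp add: algebra_simps)
        then have "(((u * m + v) * a) mod N * c) mod N = 0" by simp
        then have "((u * m + v) * a * c) mod N = 0" by (simp add: mod_mult_left_eq)
        then have "((u * m + v) * (c * a)) mod N = 0" by (simp add: algebra_simps)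
        then have "((u * m + v) * ((c * a) mod N)) mod N = 0" by (simp add: mod_mult_right_eq)
        then have z: "(u * m + v) mod N = 0" using ca by simp
        have "v mod N = (u * m) mod N"
        proof -
          have "v = (u*m + v) + u * m" by (simp add: algebra_simps bpoly_add_self)
          then have "v mod N = ((u*m + v) mod N + (u * m) mod N) mod N"
            by (metis mod_add_eq)
          then show ?thesis using z by simp
        qed
        then have vum: "v = (u * m) mod N" using vv by simp
        define c' where "c' = (u * c) mod N"
        have c'R: "c' \<in> Rn n" using RnI c'_def by simp
        have "mulR n c' a = (u * c * a) mod N"
          unfolding mR c'_def by (rule mod_mult_left_eq)
        also have "\<dots> = (u * ((c * a) mod N)) mod N"
          by (simp add: mod_mult_right_eq mult.assoc)
        also have "\<dots> = u" using ca uu by simp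
        finally have e1: "mulR n c' a = u" .
        have "mulR n c' b = (u * c * b) mod N"
          unfolding mR c'_def by (rule mod_mult_left_eq)
        also have "\<dots> = (u * c * (m * a)) mod N"
          unfolding bb by (rule mod_mult_right_eq)
        also have "\<dots> = ((u * m) * (c * a)) mod N" by (simp add: algebra_simps)
        also have "\<dots> = ((u * m) * ((c * a) mod N)) mod N" by (simp add: mod_mult_right_eq)
        also have "\<dots> = (u * m) mod N" using ca by simp
        finally have e2: "mulR n c' b = v" using vum by simp
        show "w \<in> GB_C2 n a b" unfolding GB_C2_def using e1 e2 w(1) c'R by blast
      qed
    next
      show "GB_C2 n a b \<subseteq> GB_C1 n a b"
      proof
        fix w assume "w \<in> GB_C2 n a b"
        then obtain d where w: "w = (mulR n d a, mulR n d b)" by (auto simp: GB_C2_def)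
        have "mulR n (mulR n d a) b + mulR n (mulR n d b) a
            = (d * a * b) mod N + (d * a * b) mod N"
          unfolding mR by (simp add: mod_mult_left_eq mod_mult_right_eq algebra_simps)
        also have "\<dots> = 0" by (rule bpoly_add_self)
        finally show "w \<in> GB_C1 n a b" using w RnI by (simp add: GB_C1_def mR)
      qed
    qed
    then have "GB_dim n a b = 0" by (simp add: GB_dim_def)
    then show False using assms(6) by simp
  qed
  define S where "S = {pwt w | w. w \<in> GB_C1 n a b - GB_C2 n a b}
                       \<union> {pwt w | w. w \<in> GB_C1' n a b - GB_C2' n a b}"
  have fin: "finite S"
  proof (rule finite_subset[of _ "{..2*n}"])
    show "S \<subseteq> {..2*n}"
    proof
      fix k assume "k \<in> S"
      then obtain u v where k: "k = pwt (u, v)" "u \<in> Rn n" "v \<in> Rn n"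
        unfolding S_def GB_C1_def GB_C1'_def by auto
      have "wt u \<le> n" "wt v \<le> n" using wt_le[OF assms(1)] k by auto
      then show "k \<in> {..2*n}" using k(1) by (simp add: pwt_def)
    qed
  qed simp
  have "pwt (1, m) \<in> S" unfolding S_def using w1 w2 by blast
  then have "Min S \<le> pwt (1, m)" using fin by simp
  then show ?thesis by (simp add: S_def GB_dist_def pwt_def wt_one)
qed

end
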